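(* Let $\Sigma$ be a predictive theory and $A \Rightarrow B$ a predictive formula. Put $\Sigma_{A}^B = \{E+i \Rightarrow F+i \mid E \Rightarrow F \in \Sigma,\ i \in \mathbb{Z},\ l(A)-l(E) \leq i \leq u(B)-l(F)\}$. Then $\Sigma \vdash A \Rightarrow B$ if and only if $\Sigma_{A}^B \vdash_\mathcal{R} A \Rightarrow B$, where $\mathcal{R}$ is the deduction system consisting of (Ax) and (Cut).
   Context: $Y$ is a non-empty finite set of attributes and $\mathcal{T}_Y = \{y^i \mid y \in Y, i \in \mathbb{Z}\}$; $M + j = \{y^{i+j} \mid y^i \in M\}$. A formula is $A \Rightarrow B$ with $A,B$ finite subsets of $\mathcal{T}_Y$; a theory is a set of formulas. For finite non-empty $M \subseteq \mathcal{T}_Y$, $l(M) = \min\{i \mid y^i \in M\}$ and $u(M) = \max\{i \mid y^i \in M\}$. A formula $A \Rightarrow B$ is predictive if $A \neq \emptyset$, $B \neq \emptyset$ and $i \leq j$ for all $x^i \in A$, $y^j \in B$ (equivalently $u(A) \le l(B)$); a theory is predictive if all its formulas are. Deduction rules (for arbitrary finite $A,B,C,D \subseteq \mathcal{T}_Y$, $i \in \mathbb{Z}$): (Ax) infer $A \cup B \Rightarrow A$; (Cut) from $A \Rightarrow B$ and $B \cup C \Rightarrow D$ infer $A \cup C \Rightarrow D$; (Shf) from $A \Rightarrow B$ infer $A+i \Rightarrow B+i$. For a set of rules $\mathcal{R}$, $\Sigma \vdash_\mathcal{R} A \Rightarrow B$ means there is a finite sequence ending with $A \Rightarrow B$ each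 member of which is in $\Sigma$ or follows from earlier members by a rule of $\mathcal{R}$; $\vdash$ denotes $\vdash_\mathcal{R}$ for $\mathcal{R}$ = \{(Ax), (Cut), (Shf)\}. *)

theory Defs
  imports Main
begin

(* Attributes: elements of a type 'y, Y = UNIV :: 'y set, assumed finite (nonempty automatically).
   Terms y^i are pairs (y, i) :: 'y \<times> int. *)

type_synonym 'y tm = "'y \<times> int"
type_synonym 'y fml = "'y tm set \<times> 'y tm set"

definition shift :: "'y tm set \<Rightarrow> int \<Rightarrow> 'y tm set" where
  "shift M j = (\<lambda>(y, i). (y, i + j)) ` M"

definition lo :: "'y tm set \<Rightarrow> int" where
  "lo M = Min (snd ` M)"

definition up :: "'y tm set \<Rightarrow> int" where
  "up M = Max (snd ` M)"

definition is_formula :: "'y fml \<Rightarrow> bool" where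
  "is_formula \<phi> \<longleftrightarrow> finite (fst \<phi>) \<and> finite (snd \<phi>)"

definition is_theory :: "'y fml set \<Rightarrow> bool" where
  "is_theory \<Sigma> \<longleftrightarrow> (\<forall>\<phi>\<in>\<Sigma>. is_formula \<phi>)"

definition predictive :: "'y fml \<Rightarrow> bool" where
  "predictive \<phi> \<longleftrightarrow> (case \<phi> of (A, B) \<Rightarrow>
     A \<noteq> {} \<and> B \<noteq> {} \<and> (\<forall>x i y j. (x, i) \<in> A \<longrightarrow> (y, j) \<in> B \<longrightarrow> i \<le> j))"

definition predictive_theory :: "'y fml set \<Rightarrow> bool" where
  "predictive_theory \<Sigma> \<longleftrightarrow> (\<forall>\<phi>\<in>\<Sigma>. predictive \<phi>)"

(* The flag shf says whether (Shf) is among the rules: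
   derives True  \<Sigma> = \<turnstile>   with rules {Ax, Cut, Shf}
   derives False \<Sigma> = \<turnstile>_R with rules {Ax, Cut}.
   The inductive closure coincides with existence of a finite derivation sequence. *)
inductive derives :: "bool \<Rightarrow> 'y fml set \<Rightarrow> 'y fml \<Rightarrow> bool" for shf :: bool and \<Sigma> :: "'y fml set" where
  hyp: "\<phi> \<in> \<Sigma> \<Longrightarrow> derives shf \<Sigma> \<phi>"
| ax: "finite A \<Longrightarrow> finite B \<Longrightarrow> derives shf \<Sigma> (A \<union> B, A)"
| cut: "finite A \<Longrightarrow> finite B \<Longrightarrow> finite C \<Longrightarrow> finite D \<Longrightarrow>
        derives shf \<Sigma> (A, B) \<Longrightarrow> derives shf \<Sigma> (B \<union> C, D) \<Longrightarrow> derives shf \<Sigma> (A \<union> C, D)"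
| shf: "shf \<Longrightarrow> finite A \<Longrightarrow> finite B \<Longrightarrow> derives shf \<Sigma> (A, B) \<Longrightarrow>
        derives shf \<Sigma> (shift A i, shift B i)"

definition restricted :: "'y fml set \<Rightarrow> 'y tm set \<Rightarrow> 'y tm set \<Rightarrow> 'y fml set" where
  "restricted \<Sigma> A B = {(shift E i, shift F i) | E F i.
      (E, F) \<in> \<Sigma> \<and> lo A - lo E \<le> i \<and> i \<le> up B - lo F}"

end

theory Submission
  imports Defs
begin

lemma shift_mem: "(y, k) \<in> shift X j \<longleftrightarrow> (y, k - j) \<in> X"
  unfolding shift_def by (force simp: image_iff)

lemma shift_Un: "shift (X \<union> Y) j = shift X j \<union> shift Y j"
  unfolding shift_def by (rule image_Un)

lemma shift_shift: "shift (shift X i) j = shift X (i + j)"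
  unfolding shift_def by (force simp: image_iff add.assoc)

lemma shift_finite: "finite X \<Longrightarrow> finite (shift X j)"
  unfolding shift_def by simp

lemma shift_0: "shift X 0 = X"
  unfolding shift_def by (force simp: image_iff)

lemma lo_le: "finite M \<Longrightarrow> (y, j) \<in> M \<Longrightarrow> lo M \<le> j"
  unfolding lo_def by (metis Min_le finite_imageI image_eqI snd_conv)

lemma lo_ex: "finite M \<Longrightarrow> M \<noteq> {} \<Longrightarrow> \<exists>y. (y, lo M) \<in> M"
proof -
  assume "finite M" "M \<noteq> {}"
  then have "lo M \<in> snd ` M" unfolding lo_def by (intro Min_in) auto
  then show ?thesis by force
qed

lemma up_ge: "finite M \<Longrightarrow> (y, j) \<in> M \<Longrightarrow> j \<le> up M"
  unfolding up_def by (metis Max_ge finite_imageI image_eqI snd_conv)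

lemma sound_shf:
  assumes "derives s \<Gamma> \<phi>"
    and "\<forall>(E,F)\<in>\<Gamma>. \<forall>i. shift E i \<subseteq> M \<longrightarrow> shift F i \<subseteq> M"
  shows "\<forall>j. shift (fst \<phi>) j \<subseteq> M \<longrightarrow> shift (snd \<phi>) j \<subseteq> M"
  using assms
proof (induction rule: derives.induct)
  case (hyp \<phi>) then show ?case by (cases \<phi>) fastforce
next
  case (ax A B) then show ?case by (auto simp: shift_Un)
next
  case (cut A B C D) then show ?case by (auto simp: shift_Un)
next
  case (shf A B i) then show ?case by (auto simp: shift_shift)
qed

lemma sound_F:
  assumes "derives False \<Gamma> \<phi>"
    and "\<forall>(E,F)\<in>\<Gamma>. E \<subseteq> M \<longrightarrow> F \<subseteq> M"
  shows "fst \<phi> \<subseteq> M \<longrightarrow> snd \<phi> \<subseteq> M"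
  using assms
proof (induction rule: derives.induct)
  case (hyp \<phi>) then show ?case by (cases \<phi>) fastforce
next
  case (ax A B) then show ?case by auto
next
  case (cut A B C D) then show ?case by auto
next
  case (shf A B i) then show ?case by auto
qed

lemma d_trans:
  assumes "derives s G (A, Y)" "derives s G (A \<union> Y, Z)" "finite A" "finite Y" "finite Z"
  shows "derives s G (A, Z)"
proof -
  have "derives s G (A \<union> A, Z)"
    using derives.cut[OF assms(3) assms(4) assms(3) assms(5) assms(1)] assms(2)
    by (simp add: Un_commute)
  then show ?thesis by simp
qed

lemma d_union:
  assumes "derives s G (A, Y)" "derives s G (A, Z)" "finite A" "finite Y" "finite Z"
  shows "derives s G (A, Y \<union> Z)"
proof -
  have ax: "derives s G ((Z \<union> Y) \<union> {}, Z \<union> Y)"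
    using assms by (intro derives.ax) auto
  have "derives s G (A \<union> Y, Z \<union> Y)"
    using derives.cut[OF assms(3) assms(5) assms(4) _ assms(2)] ax assms by simp
  then have "derives s G (A, Z \<union> Y)"
    using d_trans[OF assms(1)] assms by simp
  then show ?thesis by (simp add: Un_commute)
qed

lemma d_empty: "finite A \<Longrightarrow> derives s G (A, {})"
  using derives.ax[of "{}" A s G] by simp

lemma d_finite_set:
  assumes "finite Y" "finite A" "\<forall>t\<in>Y. derives s G (A, {t})"
  shows "derives s G (A, Y)"
  using assms
proof (induction Y rule: finite_induct)
  case empty then show ?case by (simp add: d_empty)
next
  case (insert t Y)
  then have "derives s G (A, {t} \<union> Y)" by (intro d_union) auto
  then show ?case by simp
qed

lemma d_single:
  assumes "derives s G (A, F)" "t \<in> F" "finite A" "finite F"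
  shows "derives s G (A, {t})"
proof -
  have "derives s G ({t} \<union> F, {t})" using assms by (intro derives.ax) auto
  then have ax: "derives s G (F \<union> {}, {t})" using assms(2) by (simp add: insert_absorb)
  have "derives s G (A \<union> {}, {t})"
    using derives.cut[OF assms(3) assms(4) _ _ assms(1) ax] by simp
  then show ?thesis by simp
qed

lemma restricted_E:
  assumes "(X, Y) \<in> restricted \<Sigma> A B"
  obtains E F i where "(E, F) \<in> \<Sigma>" "X = shift E i" "Y = shift F i"
    "lo A - lo E \<le> i" "i \<le> up B - lo F"
  using assms unfolding restricted_def by auto

lemma back_dir:
  assumes "derives False \<Gamma> \<phi>" "is_theory \<Sigma>" "\<Gamma> \<subseteq> restricted \<Sigma> A B"
  shows "derives True \<Sigma> \<phi>"
  using assms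
proof (induction rule: derives.induct)
  case (hyp \<phi>)
  then obtain E F i where EF: "(E, F) \<in> \<Sigma>" "\<phi> = (shift E i, shift F i)"
    by (metis restricted_E subsetD surj_pair)
  have "finite E" "finite F" using hyp.prems(1) EF(1) unfolding is_theory_def is_formula_def by force+
  then show ?case using EF derives.shf derives.hyp by metis
next
  case (ax A B) then show ?case by (simp add: derives.ax)
next
  case (cut A B C D) then show ?case by (simp add: derives.cut)
next
  case (shf A B i) then show ?case by simp
qed

theorem theorem14:
  fixes \<Sigma> :: "('y::finite) fml set" and A B :: "'y tm set"
  assumes "is_theory \<Sigma>" and "predictive_theory \<Sigma>"
    and "finite A" and "finite B" and "predictive (A, B)"
  shows "derives True \<Sigma> (A, B) \<longleftrightarrow> derives False (restricted \<Sigma> A B) (A, B)"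
proof
  let ?R = "restricted \<Sigma> A B"
  have fin: "\<And>E F. (E, F) \<in> \<Sigma> \<Longrightarrow> finite E \<and> finite F"
  proof -
    fix E F assume "(E, F) \<in> \<Sigma>"
    then have "is_formula (E, F)" using assms(1) unfolding is_theory_def by blast
    then show "finite E \<and> finite F" by (simp add: is_formula_def)
  qed
  have pr: "\<And>E F. (E, F) \<in> \<Sigma> \<Longrightarrow> E \<noteq> {} \<and> F \<noteq> {} \<and> (\<forall>x i y j. (x, i) \<in> E \<longrightarrow> (y, j) \<in> F \<longrightarrow> i \<le> j)"
  proof -
    fix E F assume "(E, F) \<in> \<Sigma>"
    then have "predictive (E, F)" using assms(2) unfolding predictive_theory_def by blast
    then show "E \<noteq> {} \<and> F \<noteq> {} \<and> (\<forall>x i y j. (x, i) \<in> E \<longrightarrow> (y, j) \<in> F \<longrightarrow> i \<le> j)"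
      by (simp add: predictive_def)
  qed
  define K where "K = {t. derives False ?R (A, {t})}"
  have KA: "A \<subseteq> K"
  proof
    fix t assume "t \<in> A"
    have "derives False ?R ({t} \<union> A, {t})" using assms(3) by (intro derives.ax) auto
    then show "t \<in> K" using \<open>t \<in> A\<close> unfolding K_def by (simp add: insert_absorb)
  qed
  have Kfin: "\<And>Y. finite Y \<Longrightarrow> Y \<subseteq> K \<Longrightarrow> derives False ?R (A, Y)"
    by (intro d_finite_set assms(3)) (auto simp: K_def)
  have Kcl: "\<And>E' F'. (E', F') \<in> ?R \<Longrightarrow> E' \<subseteq> K \<Longrightarrow> F' \<subseteq> K"
  proof -
    fix E' F' assume R: "(E', F') \<in> ?R" and EK: "E' \<subseteq> K"
    obtain E F i where EF: "(E, F) \<in> \<Sigma>" "E' = shift E i" "F' = shift F i"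
      "lo A - lo E \<le> i" "i \<le> up B - lo F"
      by (rule restricted_E[OF R])
    have fE: "finite E'" "finite F'" using fin[OF EF(1)] EF by (auto simp: shift_finite)
    have dE: "derives False ?R (A, E')" using Kfin fE EK by blast
    have h: "derives False ?R (E' \<union> {}, F')" using R by (simp add: derives.hyp)
    have "derives False ?R (A \<union> {}, F')"
      using derives.cut[OF assms(3) fE(1) _ fE(2) dE h] by simp
    then have dF: "derives False ?R (A, F')" by simp
    show "F' \<subseteq> K"
    proof
      fix t assume "t \<in> F'"
      from d_single[OF dF this assms(3) fE(2)] show "t \<in> K" by (simp add: K_def)
    qed
  qed
  have Klo: "\<And>y k. (y, k) \<in> K \<Longrightarrow> lo A \<le> k"
  proof -
    fix y k assume "(y, k) \<in> K"
    then have d: "derives False ?R (A, {(y, k)})" unfolding K_def by simp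
    let ?M = "{t. lo A \<le> snd t}"
    have cl1: "F' \<subseteq> ?M" if R: "(E', F') \<in> ?R" for E' F'
    proof
      fix t assume tF: "t \<in> F'"
      obtain z j where zj0: "t = (z, j)" by (cases t)
      have zj: "(z, j) \<in> F'" using tF zj0 by simp
      obtain E F i where EF: "(E, F) \<in> \<Sigma>" "E' = shift E i" "F' = shift F i"
        "lo A - lo E \<le> i" "i \<le> up B - lo F"
        by (rule restricted_E[OF R])
      have fE: "finite E" and nE: "E \<noteq> {}" using fin[OF EF(1)] pr[OF EF(1)] by simp_all
      obtain x where x: "(x, lo E) \<in> E" using lo_ex[OF fE nE] by blast
      have zF: "(z, j - i) \<in> F" using zj EF(3) by (simp add: shift_mem)
      have "\<forall>x i y j. (x, i) \<in> E \<longrightarrow> (y, j) \<in> F \<longrightarrow> i \<le> j" using pr[OF EF(1)] by simp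
      then have "lo E \<le> j - i" using x zF by blast
      then show "t \<in> ?M" using EF(4) zj0 by simp
    qed
    have cl: "\<forall>(E',F')\<in>?R. E' \<subseteq> ?M \<longrightarrow> F' \<subseteq> ?M"
      using cl1 by blast
    have "A \<subseteq> ?M"
    proof
      fix t assume "t \<in> A"
      then show "t \<in> ?M" using lo_le[OF assms(3), of "fst t" "snd t"] by simp
    qed
    then have "{(y, k)} \<subseteq> ?M" using sound_F[OF d cl] by simp
    then show "lo A \<le> k" by simp
  qed
  show "derives True \<Sigma> (A, B) \<Longrightarrow> derives False ?R (A, B)"
  proof -
    assume d: "derives True \<Sigma> (A, B)"
    define M where "M = K \<union> {t. up B < snd t}"
    have cl1: "shift F i \<subseteq> M" if EF: "(E, F) \<in> \<Sigma>" and sub: "shift E i \<subseteq> M" for E F i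
    proof -
      have fF: "finite F" and fE: "finite E" and nE: "E \<noteq> {}" and nF: "F \<noteq> {}"
        using fin[OF EF] pr[OF EF] by simp_all
      have P: "\<forall>x i y j. (x, i) \<in> E \<longrightarrow> (y, j) \<in> F \<longrightarrow> i \<le> j" using pr[OF EF] by simp
      show "shift F i \<subseteq> M"
      proof (cases "up B < lo F + i")
        case True
        show ?thesis
        proof
          fix t assume tF: "t \<in> shift F i"
          obtain z j where t0: "t = (z, j)" by (cases t)
          have t2: "(z, j - i) \<in> F" using tF t0 by (simp add: shift_mem)
          have "lo F \<le> j - i" by (rule lo_le[OF fF t2])
          then show "t \<in> M" using True t0 by (simp add: M_def)
        qed
      next
        case False
        obtain w where w: "(w, lo F) \<in> F" using lo_ex[OF fF nF] by blast
        have EK: "shift E i \<subseteq> K"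
        proof
          fix t assume tE: "t \<in> shift E i"
          obtain z j where t0: "t = (z, j)" by (cases t)
          have t2: "(z, j - i) \<in> E" using tE t0 by (simp add: shift_mem)
          have "j - i \<le> lo F" using P w t2 by blast
          moreover have "t \<in> M" using tE sub by (rule subsetD[rotated])
          ultimately show "t \<in> K" using False t0 by (simp add: M_def)
        qed
        obtain x where x: "(x, lo E) \<in> E" using lo_ex[OF fE nE] by blast
        have "(x, lo E + i) \<in> shift E i" using x by (simp add: shift_mem)
        then have "(x, lo E + i) \<in> K" using EK by (rule subsetD[rotated])
        then have "lo A \<le> lo E + i" by (rule Klo)
        then have i1: "lo A - lo E \<le> i" by simp
        have i2: "i \<le> up B - lo F" using False by simp
        have "(shift E i, shift F i) \<in> ?R"
          unfolding restricted_def
          by (rule CollectI, rule exI[of _ E], rule exI[of _ F], rule exI[of _ i]) (simp add: EF i1 i2)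
        then have "shift F i \<subseteq> K" using EK by (rule Kcl)
        then show ?thesis by (auto simp: M_def)
      qed
    qed
    have cl: "\<forall>(E,F)\<in>\<Sigma>. \<forall>i. shift E i \<subseteq> M \<longrightarrow> shift F i \<subseteq> M"
      using cl1 by blast
    have "shift A 0 \<subseteq> M" using KA by (auto simp: M_def shift_0)
    then have "shift B 0 \<subseteq> M" using sound_shf[OF d cl] by simp
    then have BM: "B \<subseteq> M" by (simp add: shift_0)
    have "B \<subseteq> K"
    proof
      fix t assume tB: "t \<in> B"
      obtain z j where t0: "t = (z, j)" by (cases t)
      have "j \<le> up B" using up_ge[OF assms(4)] tB t0 by simp
      moreover have "t \<in> M" using tB BM by (rule subsetD[rotated])
      ultimately show "t \<in> K" using t0 by (simp add: M_def)
    qed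
    then show ?thesis by (rule Kfin[OF assms(4)])
  qed
next
  assume "derives False (restricted \<Sigma> A B) (A, B)"
  then show "derives True \<Sigma> (A, B)" by (rule back_dir[OF _ assms(1) subset_refl])
qed

end
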